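(* Let $F$ be a comparison graph on an array $A$ whose underlying undirected graph is a forest with $k$ components, each of which contains a directed Hamiltonian path. Let $H$ be the graph obtained by applying the merge step to $F$ with the list of roots of its components (in some order). If $k>1$, then $H$ has fewer than $k$ components; in fact, for any $k\ge1$, $H$ has exactly $\lceil k/2\rceil$ components.
   Context: An array is a finite sequence $A=(A[1],\dots,A[n])$ of pairwise distinct real numbers. A comparison graph on $A$ is a directed graph on $\{1,\dots,n\}$ all of whose arcs $(u,v)$ satisfy $A[u]<A[v]$. Components are connected components of the underlying undirected graph; a directed Hamiltonian path of a component is a directed path visiting each of its vertices exactly once; the root of a component is its minimum-valued vertex. Component merge of two distinct components $C,D$: set $p,q$ to the roots of $C,D$; while both are defined: if $A[p]<A[q]$ add the arc $(p,q)$ and replace $p$ by the smallest-valued out-neighbour of $p$ within $C$ (ignoring arcs added during this merge; undefined if none); otherwise add $(q,p)$ and replace $q$ analogously within $D$. Merge step with a root list $(\rho_1,\dots,\rho_k)$: component-merge the components of $\rho_{2j-1}$ and $\rho_{2j}$ for $j=1,\dots,\lfloor k/2\rfloor$. *)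

theory Defs
  imports Complex_Main
begin

text \<open>Arrays: A :: nat => real on the index set {1..n}, injective there (pairwise distinct).
Graphs: sets of arcs (u,v).\<close>

definition comparison_graph :: "nat \<Rightarrow> (nat \<Rightarrow> real) \<Rightarrow> (nat \<times> nat) set \<Rightarrow> bool" where
  "comparison_graph n A G \<longleftrightarrow> G \<subseteq> {1..n} \<times> {1..n} \<and> (\<forall>(u,v)\<in>G. A u < A v)"

definition und :: "(nat \<times> nat) set \<Rightarrow> nat \<Rightarrow> nat \<Rightarrow> bool" where
  "und G u v \<longleftrightarrow> (u,v) \<in> G \<or> (v,u) \<in> G"

definition comp :: "(nat \<times> nat) set \<Rightarrow> nat \<Rightarrow> nat set" where
  "comp G v = {u. (v,u) \<in> (G \<union> G\<inverse>)\<^sup>*}"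

definition comps :: "nat set \<Rightarrow> (nat \<times> nat) set \<Rightarrow> nat set set" where
  "comps V G = comp G ` V"

definition und_cycle :: "(nat \<times> nat) set \<Rightarrow> nat list \<Rightarrow> bool" where
  "und_cycle G xs \<longleftrightarrow> length xs \<ge> 3 \<and> distinct xs \<and>
     (\<forall>i < length xs. und G (xs ! i) (xs ! ((i + 1) mod length xs)))"

definition und_forest :: "nat set \<Rightarrow> (nat \<times> nat) set \<Rightarrow> bool" where
  "und_forest V G \<longleftrightarrow> \<not> (\<exists>xs. set xs \<subseteq> V \<and> und_cycle G xs)"

definition ham_path :: "(nat \<times> nat) set \<Rightarrow> nat set \<Rightarrow> nat list \<Rightarrow> bool" where
  "ham_path G C ps \<longleftrightarrow> distinct ps \<and> set ps = C \<and>
     (\<forall>i. i + 1 < length ps \<longrightarrow> (ps ! i, ps ! (i + 1)) \<in> G)"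

definition root :: "(nat \<Rightarrow> real) \<Rightarrow> nat set \<Rightarrow> nat" where
  "root A C = (THE r. r \<in> C \<and> (\<forall>x\<in>C. A r \<le> A x))"

definition nxt :: "(nat \<Rightarrow> real) \<Rightarrow> (nat \<times> nat) set \<Rightarrow> nat set \<Rightarrow> nat \<Rightarrow> nat option" where
  "nxt A G C p = (if \<exists>v\<in>C. (p,v) \<in> G
     then Some (THE v. v \<in> C \<and> (p,v) \<in> G \<and> (\<forall>w\<in>C. (p,w) \<in> G \<longrightarrow> A v \<le> A w))
     else None)"

text \<open>The merge loop, run with a fuel parameter; arcs are looked up in the graph G
as it was before the merge (arcs added during the merge are ignored).\<close>
fun mloop :: "(nat \<Rightarrow> real) \<Rightarrow> (nat \<times> nat) set \<Rightarrow> nat set \<Rightarrow> nat set \<Rightarrow> nat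
    \<Rightarrow> nat option \<Rightarrow> nat option \<Rightarrow> (nat \<times> nat) set" where
  "mloop A G C D 0 p q = {}"
| "mloop A G C D (Suc f) (Some p) (Some q) =
     (if A p < A q then insert (p,q) (mloop A G C D f (nxt A G C p) (Some q))
      else insert (q,p) (mloop A G C D f (Some p) (nxt A G D q)))"
| "mloop A G C D (Suc f) _ _ = {}"

text \<open>Component merge. The fuel card C + card D suffices: each pointer moves along
strictly increasing values inside its (finite) component.\<close>
definition comp_merge :: "(nat \<Rightarrow> real) \<Rightarrow> (nat \<times> nat) set \<Rightarrow> nat set \<Rightarrow> nat set \<Rightarrow> (nat \<times> nat) set" where
  "comp_merge A G C D = G \<union> mloop A G C D (card C + card D) (Some (root A C)) (Some (root A D))"

fun merge_step :: "(nat \<Rightarrow> real) \<Rightarrow> (nat \<times> nat) set \<Rightarrow> nat list \<Rightarrow> (nat \<times> nat) set" where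
  "merge_step A G (r1 # r2 # rs) = merge_step A (comp_merge A G (comp G r1) (comp G r2)) rs"
| "merge_step A G _ = G"

end

theory Submission
  imports Defs
begin

lemma uniq_min:
  assumes "finite S" "S \<noteq> {}" "S \<subseteq> V" "inj_on A V"
  shows "\<exists>!m. m \<in> S \<and> (\<forall>x\<in>S. A m \<le> (A x::real))"
proof -
  have "Min (A ` S) \<in> A ` S" using assms by simp
  then obtain m where m: "m \<in> S" "A m = Min (A ` S)" by auto
  have mm: "\<forall>x\<in>S. A m \<le> A x" using m assms by simp
  show ?thesis
  proof (rule ex1I[of _ m])
    show "m \<in> S \<and> (\<forall>x\<in>S. A m \<le> A x)" using m mm by blast
  next
    fix m' assume "m' \<in> S \<and> (\<forall>x\<in>S. A m' \<le> A x)"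
    then have m': "m' \<in> S" "\<forall>x\<in>S. A m' \<le> A x" by blast+
    have "A m' \<le> A m" using m'(2) m(1) by blast
    moreover have "A m \<le> A m'" using mm m'(1) by blast
    ultimately have "A m' = A m" by (rule antisym)
    moreover have "m' \<in> V" "m \<in> V" using m'(1) m(1) assms(3) by blast+
    ultimately show "m' = m" using assms(4) by (simp add: inj_on_def)
  qed
qed

lemma root_in:
  assumes "finite C" "C \<noteq> {}" "C \<subseteq> V" "inj_on A V"
  shows "root A C \<in> C"
proof -
  have "\<exists>!m. m \<in> C \<and> (\<forall>x\<in>C. A m \<le> (A x))" using uniq_min[OF assms] .
  from theI'[OF this] show ?thesis unfolding root_def by blast
qed

lemma nxt_in:
  assumes "finite C" "C \<subseteq> V" "inj_on A V" "nxt A G C p = Some v"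
  shows "v \<in> C"
proof -
  let ?S = "{v\<in>C. (p,v) \<in> G}"
  have ex: "\<exists>v\<in>C. (p,v) \<in> G" using assms(4) unfolding nxt_def by (auto split: if_splits)
  then have v: "v = (THE v. v \<in> C \<and> (p,v) \<in> G \<and> (\<forall>w\<in>C. (p,w) \<in> G \<longrightarrow> A v \<le> A w))"
    using assms(4) unfolding nxt_def by auto
  have "\<exists>!m. m \<in> ?S \<and> (\<forall>x\<in>?S. A m \<le> (A x))"
    by (rule uniq_min[where V=V]) (use assms ex in auto)
  moreover have "(\<lambda>m. m \<in> ?S \<and> (\<forall>x\<in>?S. A m \<le> (A x))) = (\<lambda>m. m \<in> C \<and> (p,m) \<in> G \<and> (\<forall>w\<in>C. (p,w) \<in> G \<longrightarrow> A m \<le> A w))"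
    by auto
  ultimately have "\<exists>!m. m \<in> C \<and> (p,m) \<in> G \<and> (\<forall>w\<in>C. (p,w) \<in> G \<longrightarrow> A m \<le> A w)" by simp
  from theI'[OF this] show ?thesis unfolding v by blast
qed

lemma mloop_sub:
  assumes "finite C" "C \<subseteq> V" "finite D" "D \<subseteq> V" "inj_on A V"
  shows "(\<forall>x. p = Some x \<longrightarrow> x \<in> C) \<Longrightarrow> (\<forall>y. q = Some y \<longrightarrow> y \<in> D) \<Longrightarrow>
     mloop A G C D f p q \<subseteq> C \<times> D \<union> D \<times> C"
proof (induction f arbitrary: p q)
  case 0
  then show ?case by simp
next
  case (Suc f)
  show ?case
  proof (cases p)
    case None then show ?thesis by simp
  next
    case (Some x)
    show ?thesis
    proof (cases q)
      case None then show ?thesis using Some by simp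
    next
      case (Some y)
      have x: "x \<in> C" and y: "y \<in> D" using Suc.prems \<open>p = Some x\<close> Some by auto
      have n1: "\<forall>z. nxt A G C x = Some z \<longrightarrow> z \<in> C" using nxt_in[OF assms(1,2,5)] by blast
      have n2: "\<forall>z. nxt A G D y = Some z \<longrightarrow> z \<in> D" using nxt_in[OF assms(3,4,5)] by blast
      show ?thesis using Suc.IH[OF n1, of "Some y"] Suc.IH[of "Some x" "nxt A G D y", OF _ n2] x y
        \<open>p = Some x\<close> Some by auto
    qed
  qed
qed


lemma comp_refl: "v \<in> comp G v" by (simp add: comp_def)

lemma R_sym: "(x,y) \<in> (G \<union> G\<inverse>)\<^sup>* \<Longrightarrow> (y,x) \<in> (G \<union> G\<inverse>)\<^sup>*"
proof -
  have "sym ((G \<union> G\<inverse>)\<^sup>*)" by (intro sym_rtrancl) (auto simp: sym_def)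
  then show "(x,y) \<in> (G \<union> G\<inverse>)\<^sup>* \<Longrightarrow> (y,x) \<in> (G \<union> G\<inverse>)\<^sup>*" by (auto simp: sym_def)
qed

lemma comp_eq: assumes "u \<in> comp G v" shows "comp G u = comp G v"
proof -
  have vu: "(v,u) \<in> (G \<union> G\<inverse>)\<^sup>*" using assms by (simp add: comp_def)
  then have uv: "(u,v) \<in> (G \<union> G\<inverse>)\<^sup>*" by (rule R_sym)
  show ?thesis
  proof
    show "comp G u \<subseteq> comp G v" unfolding comp_def using rtrancl_trans[OF vu] by blast
    show "comp G v \<subseteq> comp G u" unfolding comp_def using rtrancl_trans[OF uv] by blast
  qed
qed

lemma comp_sub: assumes "G \<subseteq> V \<times> V" "v \<in> V" shows "comp G v \<subseteq> V"
proof
  fix u assume "u \<in> comp G v"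
  then have "(v,u) \<in> (G \<union> G\<inverse>)\<^sup>*" by (simp add: comp_def)
  then show "u \<in> V" by (induction rule: rtrancl_induct) (use assms in auto)
qed

lemma comp_add:
  assumes "G \<subseteq> G'" "G' \<subseteq> G \<union> (comp G a \<union> comp G b) \<times> (comp G a \<union> comp G b)"
    and "c \<in> comp G a" "d \<in> comp G b" "(c,d) \<in> G' \<or> (d,c) \<in> G'"
  shows "comp G' v = (if v \<in> comp G a \<union> comp G b then comp G a \<union> comp G b else comp G v)"
proof -
  define S where "S = comp G a \<union> comp G b"
  define R where "R = (G \<union> G\<inverse>)\<^sup>*"
  define R' where "R' = (G' \<union> G'\<inverse>)\<^sup>*"
  have Scl: "y \<in> S" if "x \<in> S" "(x,y) \<in> R" for x y
  proof -
    have "y \<in> comp G x" using that(2) by (simp add: comp_def R_def)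
    then show ?thesis using that(1) comp_eq unfolding S_def by blast
  qed
  have one: "(x,y) \<in> R \<or> (x \<in> S \<and> y \<in> S)" if "(x,y) \<in> R'" for x y
    using that unfolding R'_def
  proof (induction rule: rtrancl_induct)
    case base then show ?case by (simp add: R_def)
  next
    case (step y z)
    show ?case
    proof (cases "(y,z) \<in> G \<union> G\<inverse>")
      case True
      then have yz: "(y,z) \<in> R" unfolding R_def by blast
      from step.IH show ?thesis
      proof
        assume "(x,y) \<in> R" then show ?thesis using yz unfolding R_def by (meson rtrancl_trans)
      next
        assume "x \<in> S \<and> y \<in> S" then show ?thesis using yz Scl by blast
      qed
    next
      case False
      then have ys: "y \<in> S" "z \<in> S" using step.hyps(2) assms(2) unfolding S_def by auto
      from step.IH show ?thesis
      proof
        assume "(x,y) \<in> R" then have "(y,x) \<in> R" using R_sym by (simp add: R_def)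
        then show ?thesis using ys Scl by blast
      qed (use ys in blast)
    qed
  qed
  have two: "R \<subseteq> R'" unfolding R_def R'_def using assms(1) by (intro rtrancl_mono) blast
  have R'sym: "(y,x) \<in> R'" if "(x,y) \<in> R'" for x y using R_sym that by (simp add: R'_def)
  have "(c,d) \<in> R'" using assms(5) unfolding R'_def by auto
  moreover have "(a,c) \<in> R'" "(b,d) \<in> R'" using assms(3,4) two by (auto simp: comp_def R_def)
  ultimately have ab: "(a,b) \<in> R'" using R'sym[of b d] unfolding R'_def
    by (meson rtrancl_trans)
  have toa: "(a,x) \<in> R'" if "x \<in> S" for x
  proof -
    have "(a,x) \<in> R \<or> (b,x) \<in> R" using that by (auto simp: S_def comp_def R_def)
    then show ?thesis
    proof
      assume "(a,x) \<in> R" then show ?thesis using two by blast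
    next
      assume "(b,x) \<in> R" then have "(b,x) \<in> R'" using two by blast
      then show ?thesis using ab unfolding R'_def by (rule rtrancl_trans[rotated])
    qed
  qed
  have three: "(x,y) \<in> R'" if "x \<in> S" "y \<in> S" for x y
    using R'sym[OF toa[OF that(1)]] toa[OF that(2)] unfolding R'_def by (rule rtrancl_trans)
  show ?thesis
  proof (cases "v \<in> S")
    case True
    have "comp G' v \<subseteq> S"
    proof
      fix y assume "y \<in> comp G' v"
      then have "(v,y) \<in> R'" by (simp add: comp_def R'_def)
      then show "y \<in> S" using one True Scl by blast
    qed
    moreover have "S \<subseteq> comp G' v" using three True by (auto simp: comp_def R'_def)
    ultimately show ?thesis using True unfolding S_def by auto
  next
    case False
    have "comp G' v \<subseteq> comp G v"
    proof
      fix y assume "y \<in> comp G' v"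
      then have "(v,y) \<in> R'" by (simp add: comp_def R'_def)
      then show "y \<in> comp G v" using one False by (auto simp: comp_def R_def)
    qed
    moreover have "comp G v \<subseteq> comp G' v" using two by (auto simp: comp_def R'_def R_def)
    ultimately show ?thesis using False unfolding S_def by auto
  qed
qed


lemma comps_card:
  assumes "finite V" "a \<in> V" "b \<in> V" "comp G a \<noteq> comp G b"
    and "\<And>v. comp G' v = (if v \<in> comp G a \<union> comp G b then comp G a \<union> comp G b else comp G v)"
  shows "card (comps V G') + 1 = card (comps V G)"
proof -
  define S where "S = comp G a \<union> comp G b"
  have eq: "comps V G' = insert S (comps V G - {comp G a, comp G b})"
  proof
    show "comps V G' \<subseteq> insert S (comps V G - {comp G a, comp G b})"
    proof
      fix X assume "X \<in> comps V G'"
      then obtain v where v: "v \<in> V" "X = comp G' v" by (auto simp: comps_def)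
      show "X \<in> insert S (comps V G - {comp G a, comp G b})"
      proof (cases "v \<in> S")
        case True then show ?thesis using v assms(5) S_def by auto
      next
        case False
        then have "comp G v \<noteq> comp G a" "comp G v \<noteq> comp G b" using comp_refl[of v G] S_def by auto
        then show ?thesis using v assms(5) False S_def by (auto simp: comps_def)
      qed
    qed
  next
    show "insert S (comps V G - {comp G a, comp G b}) \<subseteq> comps V G'"
    proof
      fix X assume X: "X \<in> insert S (comps V G - {comp G a, comp G b})"
      show "X \<in> comps V G'"
      proof (cases "X = S")
        case True
        then have "X = comp G' a" using assms(5) comp_refl[of a G] S_def by auto
        then show ?thesis using assms(2) by (auto simp: comps_def)
      next
        case False
        then obtain v where v: "v \<in> V" "X = comp G v" "X \<noteq> comp G a" "X \<noteq> comp G b"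
          using X by (auto simp: comps_def)
        have "v \<notin> S" using v comp_eq S_def by blast
        then have "X = comp G' v" using v assms(5) S_def by auto
        then show ?thesis using v by (auto simp: comps_def)
      qed
    qed
  qed
  have fin: "finite (comps V G)" using assms(1) by (simp add: comps_def)
  have notin: "S \<notin> comps V G - {comp G a, comp G b}"
  proof
    assume "S \<in> comps V G - {comp G a, comp G b}"
    then obtain v where "S = comp G v" "comp G v \<noteq> comp G a" by (auto simp: comps_def)
    moreover have "a \<in> comp G v" using calculation comp_refl[of a G] S_def by auto
    ultimately show False using comp_eq by blast
  qed
  have "card (comps V G') = card (comps V G - {comp G a, comp G b}) + 1"
    unfolding eq using fin notin by simp
  also have "\<dots> = card (comps V G) - 2 + 1"
    using fin assms by (subst card_Diff_subset) (auto simp: comps_def)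
  finally have c: "card (comps V G') = card (comps V G) - 2 + 1" .
  have "{comp G a, comp G b} \<subseteq> comps V G" using assms(2,3) by (auto simp: comps_def)
  then have "card {comp G a, comp G b} \<le> card (comps V G)" using fin by (rule card_mono[rotated])
  then have "2 \<le> card (comps V G)" using assms(4) by simp
  then show ?thesis using c by simp
qed


lemma merge_step_card:
  assumes "finite V"
  shows "inj_on A V \<Longrightarrow> G \<subseteq> V \<times> V \<Longrightarrow> set rs \<subseteq> V \<Longrightarrow> distinct rs \<Longrightarrow> inj_on (comp G) (set rs) \<Longrightarrow>
    card (comps V (merge_step A G rs)) + length rs div 2 = card (comps V G)"
proof (induction A G rs rule: merge_step.induct)
  case (1 A' G r1 r2 rs)
  note injA = "1.prems"(1) and GV = "1.prems"(2) and sV = "1.prems"(3)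
    and dis = "1.prems"(4) and injc = "1.prems"(5)
  define C where "C = comp G r1"
  define D where "D = comp G r2"
  define G' where "G' = comp_merge A' G C D"
  have r: "r1 \<in> V" "r2 \<in> V" using sV by auto
  have r12: "r1 \<noteq> r2" using dis by simp
  have CD: "C \<noteq> D"
  proof
    assume "C = D"
    then have "comp G r1 = comp G r2" by (simp add: C_def D_def)
    then show False using injc r12 by (simp add: inj_on_def)
  qed
  have Cs: "C \<subseteq> V" "D \<subseteq> V" unfolding C_def D_def using comp_sub[OF GV] r by auto
  then have Cf: "finite C" "finite D" using assms(1) finite_subset by auto
  have Cne: "r1 \<in> C" "r2 \<in> D" unfolding C_def D_def by (simp_all add: comp_refl)
  have rC: "root A' C \<in> C" "root A' D \<in> D"
    using root_in[OF Cf(1) _ Cs(1) injA] root_in[OF Cf(2) _ Cs(2) injA] Cne by blast+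
  have p1: "\<forall>x. Some (root A' C) = Some x \<longrightarrow> x \<in> C" using rC by simp
  have p2: "\<forall>x. Some (root A' D) = Some x \<longrightarrow> x \<in> D" using rC by simp
  have ml: "mloop A' G C D (card C + card D) (Some (root A' C)) (Some (root A' D)) \<subseteq> C \<times> D \<union> D \<times> C"
    by (rule mloop_sub[OF Cf(1) Cs(1) Cf(2) Cs(2) injA p1 p2])
  have "card C > 0" using Cf Cne by (auto simp: card_gt_0_iff)
  then obtain f where f: "card C + card D = Suc f" by (metis add_gr_0 gr0_implies_Suc)
  have edge: "(root A' C, root A' D) \<in> G' \<or> (root A' D, root A' C) \<in> G'"
    unfolding G'_def comp_merge_def f by simp
  have GG': "G \<subseteq> G'" "G' \<subseteq> G \<union> (C \<union> D) \<times> (C \<union> D)" using ml unfolding G'_def comp_merge_def by auto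
  have cG': "\<And>v. comp G' v = (if v \<in> C \<union> D then C \<union> D else comp G v)"
    using comp_add[of G G' r1 r2, folded C_def D_def, OF GG' rC edge] .
  have G'V: "G' \<subseteq> V \<times> V" using GG' Cs GV by blast
  have nin: "r \<notin> C \<union> D" if "r \<in> set rs" for r
  proof
    assume "r \<in> C \<union> D"
    then have "comp G r = comp G r1 \<or> comp G r = comp G r2" using comp_eq unfolding C_def D_def by blast
    moreover have "r \<noteq> r1" "r \<noteq> r2" using dis that by auto
    ultimately show False using injc that by (auto simp: inj_on_def)
  qed
  have inj': "inj_on (comp G') (set rs)"
  proof (rule inj_onI)
    fix x y assume xy: "x \<in> set rs" "y \<in> set rs" "comp G' x = comp G' y"
    then have "comp G x = comp G y" using cG' nin by simp
    then show "x = y" using injc xy(1,2) by (simp add: inj_on_def)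
  qed
  have sV': "set rs \<subseteq> V" using sV by simp
  have dis': "distinct rs" using dis by simp
  have IH: "card (comps V (merge_step A' G' rs)) + length rs div 2 = card (comps V G')"
    using "1.IH"[folded C_def D_def, folded G'_def, OF injA G'V sV' dis' inj'] .
  have cG'': "\<And>v. comp G' v = (if v \<in> comp G r1 \<union> comp G r2 then comp G r1 \<union> comp G r2 else comp G v)"
    using cG' unfolding C_def D_def .
  have CD': "comp G r1 \<noteq> comp G r2" using CD unfolding C_def D_def .
  have "card (comps V G') + 1 = card (comps V G)"
    by (rule comps_card[OF assms(1) r(1,2) CD' cG''])
  moreover have "merge_step A' G (r1 # r2 # rs) = merge_step A' G' rs"
    by (simp add: G'_def C_def D_def)
  ultimately show ?case using IH by simp
next
  case ("2_1" A G) then show ?case by simp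
next
  case ("2_2" A G v) then show ?case by simp
qed

lemma ceil_half: "int (k - k div 2) = \<lceil>real k / 2\<rceil>"
proof (cases "even k")
  case True then obtain m where "k = 2*m" by blast
  then show ?thesis by simp
next
  case False then obtain m where m: "k = 2*m+1" using oddE by blast
  have "real k / 2 = real m + 1/2" using m by simp
  then have "\<lceil>real k / 2\<rceil> = int m + 1" by (simp add: ceiling_eq_iff)
  then show ?thesis using m by simp
qed

theorem lemma3:
  fixes n k :: nat and A :: "nat \<Rightarrow> real" and F :: "(nat \<times> nat) set" and rs :: "nat list"
  assumes "inj_on A {1..n}"
    and "comparison_graph n A F"
    and "und_forest {1..n} F"
    and "k = card (comps {1..n} F)"
    and "\<forall>C \<in> comps {1..n} F. \<exists>ps. ham_path F C ps"
    and "distinct rs" and "set rs = root A ` comps {1..n} F"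
    and "k \<ge> 1"
  shows "(k > 1 \<longrightarrow> card (comps {1..n} (merge_step A F rs)) < k)
       \<and> int (card (comps {1..n} (merge_step A F rs))) = \<lceil>real k / 2\<rceil>"
proof -
  define V where "V = {1..n}"
  have FV: "F \<subseteq> V \<times> V" using assms(2) by (simp add: comparison_graph_def V_def)
  have rt: "root A (comp F v) \<in> comp F v" "comp F v \<subseteq> V" if "v \<in> V" for v
  proof -
    show cs: "comp F v \<subseteq> V" using comp_sub[OF FV that] .
    then show "root A (comp F v) \<in> comp F v"
      using root_in[OF _ _ cs, of A] assms(1) comp_refl[of v F] finite_subset[OF cs]
      unfolding V_def by auto
  qed
  have rc: "comp F (root A (comp F v)) = comp F v" if "v \<in> V" for v
    using rt[OF that] comp_eq by blast
  have rsV: "set rs \<subseteq> V" using assms(7) rt unfolding V_def[symmetric] comps_def by auto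
  have inj: "inj_on (comp F) (set rs)"
    using assms(7) rc unfolding V_def[symmetric] comps_def by (auto simp: inj_on_def)
  have injr: "inj_on (root A) (comps V F)"
  proof (rule inj_onI)
    fix X Y assume "X \<in> comps V F" "Y \<in> comps V F" "root A X = root A Y"
    then obtain x y where "x \<in> V" "y \<in> V" "X = comp F x" "Y = comp F y"
      and "root A (comp F x) = root A (comp F y)" by (auto simp: comps_def)
    then show "X = Y" using rc[of x] rc[of y] by metis
  qed
  have len: "length rs = k"
    using distinct_card[OF assms(6)] assms(4,7) card_image[OF injr] unfolding V_def by simp
  have main: "card (comps V (merge_step A F rs)) + k div 2 = k"
    using merge_step_card[of V A F rs] assms(1,4,6) FV rsV inj len unfolding V_def by simp
  then have "card (comps V (merge_step A F rs)) = k - k div 2" by simp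
  then show ?thesis using ceil_half[of k] assms(8) unfolding V_def by auto
qed

end
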